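(* Let $\lambda\in\mathbb C\setminus(\mathbb Z\setminus\{0\})$, with notation as in the context. (i) For integers $k,k'\ge0$, $|l|\le k$, $|l'|\le k'$, $\langle e_{kl},e_{k'l'}\rangle=0$ unless $k=k'$ and $l+l'=0$. (ii) For each fixed integer $l\ge0$, the polynomials $f_{kl}$, $k\ge l$, form an orthogonal basis of $\mathbb C[H]$ with respect to the bilinear form $\langle f,g\rangle_l=\mathrm{tr}\big(f(H)g(H)T_1(H)\cdots T_l(H)\big)$. (iii) For $0\le l\le k$, up to a constant factor $f_{kl}(H)$ coincides with $${}_3F_2\left(\begin{matrix}l-k,\ l+k+1,\ \tfrac12(1-\lambda-H)\\ l+1,\ l+1-\lambda\end{matrix}\ \Big|\ 1\right).$$
   Context: $\mathfrak{sl}(2)$ has basis $X,H,Y$ with $[X,Y]=H$, $[H,X]=2X$, $[H,Y]=-2Y$. $\mathfrak A_\lambda=U(\mathfrak{sl}(2))/I_\lambda$, where $I_\lambda$ is the two-sided ideal generated by $2YX+\frac12H^2+H-\frac12(\lambda^2-1)$; in $\mathfrak A_\lambda$, $XY=\frac14(\lambda^2-(H-1)^2)$. $\mathfrak{gl}(\lambda)$ is $\mathfrak A_\lambda$ with bracket $[a,b]=ab-ba$. The subalgebra generated by $H$ is identified with $\mathbb C[H]$; for $l>0$ every element of $H$-weight $2l$ (resp. $-2l$) is uniquely $X^lf(H)$ (resp. $f(H)Y^l$) with $f\in\mathbb C[H]$. The trace $\mathrm{tr}:\mathfrak{gl}(\lambda)\to\mathbb C$ is the linear functional with $\mathrm{tr}(ab)=\mathrm{tr}(ba)$,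 vanishing on elements of nonzero $H$-weight, whose restriction to $\mathbb C[H]$ is given by $\sum_{m\ge0}\mathrm{tr}(H^m)\frac{t^m}{m!}=\frac{e^{\lambda t}-e^{-\lambda t}}{e^t-e^{-t}}$ if $\lambda\neq0$ and $=\frac{2t}{e^t-e^{-t}}$ if $\lambda=0$. $\langle u,v\rangle=\mathrm{tr}(uv)$. For integers $k\ge0$, $|l|\le k$: $e_{kl}=(\mathrm{ad}\,Y)^{k-l}(X^k)$; for $0\le l\le k$, $f_{kl},f_{k,-l}\in\mathbb C[H]$ are defined by $(\mathrm{ad}\,Y)^{k-l}(X^k)=X^lf_{kl}(H)$, $(\mathrm{ad}\,Y)^{k+l}(X^k)=f_{k,-l}(H)Y^l$. $T_i(H)=\frac14(\lambda^2-(H+2i-1)^2)$, empty products equal $1$. ${}_3F_2\left(\begin{matrix}a_1,a_2,a_3\\ b_1,b_2\end{matrix}\,\big|\,z\right)=\sum_{i\ge0}\frac{(a_1)_i(a_2)_i(a_3)_i}{(b_1)_i(b_2)_i}\frac{z^i}{i!}$, $(a)_0=1$, $(a)_i=a(a+1)\cdots(a+i-1)$. *)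

theory Defs
  imports "HOL-Computational_Algebra.Computational_Algebra"
begin

text \<open>
  Concrete model of the algebra A_lam = U(sl2)/I_lam via its weight normal form.
  An element is a finitely supported function  u :: int => complex poly;
  the component u m (for m >= 0) stands for X^m (u m)(H), and for m < 0 it
  stands for (u m)(H) Y^(-m).  So u m is the component of H-weight 2m.
  The polynomial variable is H.  Relations used (all consequences of the defining
  relations):  f(H) X = X f(H+2),  Y f(H) = f(H+2) Y,
  X^n Y^n = T_0(H) T_(-1)(H) ... T_(1-n)(H),  Y^n X^n = T_1(H) ... T_n(H).
\<close>

definition shiftp :: "complex \<Rightarrow> complex poly \<Rightarrow> complex poly" where
  "shiftp c p = pcompose p [:c, 1:]"

definition Tp :: "complex \<Rightarrow> int \<Rightarrow> complex poly" where
  "Tp lam i = smult (1/4) ([:lam^2:] - [:2 * of_int i - 1, 1:]^2)"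

definition XYp :: "complex \<Rightarrow> nat \<Rightarrow> complex poly" where
  "XYp lam n = (\<Prod>i<n. Tp lam (- int i))"       \<comment> \<open>X^n Y^n\<close>

definition YXp :: "complex \<Rightarrow> nat \<Rightarrow> complex poly" where
  "YXp lam n = (\<Prod>i\<in>{1..n}. Tp lam (int i))"  \<comment> \<open>Y^n X^n\<close>

text \<open>Product of a homogeneous element of weight index a with one of weight index b
  (result has weight index a + b).\<close>
definition hprod :: "complex \<Rightarrow> int \<Rightarrow> complex poly \<Rightarrow> int \<Rightarrow> complex poly \<Rightarrow> complex poly" where
  "hprod lam a f b g =
    (if 0 \<le> a \<and> 0 \<le> b then shiftp (of_int (2*b)) f * g
     else if a < 0 \<and> b < 0 then f * shiftp (of_int (-2*a)) g
     else if 0 \<le> a then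
       (if -b \<le> a then shiftp (of_int (2*b)) (f * g) * XYp lam (nat (-b))
        else XYp lam (nat a) * shiftp (of_int (-2*a)) (f * g))
     else
       (if -a \<le> b then shiftp (of_int (2*(b+a))) (f * YXp lam (nat (-a))) * g
        else f * shiftp (of_int (2*(-a-b))) (YXp lam (nat b) * g)))"

type_synonym alg = "int \<Rightarrow> complex poly"

definition supp :: "alg \<Rightarrow> int set" where
  "supp u = {m. u m \<noteq> 0}"

definition amult :: "complex \<Rightarrow> alg \<Rightarrow> alg \<Rightarrow> alg" where
  "amult lam u v = (\<lambda>n. \<Sum>a\<in>supp u. \<Sum>b\<in>supp v.
       if a + b = n then hprod lam a (u a) b (v b) else 0)"

definition bracket :: "complex \<Rightarrow> alg \<Rightarrow> alg \<Rightarrow> alg" where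
  "bracket lam u v = (\<lambda>n. amult lam u v n - amult lam v u n)"

definition hom :: "int \<Rightarrow> complex poly \<Rightarrow> alg" where
  "hom m p = (\<lambda>n. if n = m then p else 0)"

definition Xel :: alg where "Xel = hom 1 1"
definition Yel :: alg where "Yel = hom (-1) 1"
definition Hel :: alg where "Hel = hom 0 [:0, 1:]"

definition Xpow :: "complex \<Rightarrow> nat \<Rightarrow> alg" where
  "Xpow lam k = ((amult lam Xel) ^^ k) (hom 0 1)"

definition ekl :: "complex \<Rightarrow> nat \<Rightarrow> int \<Rightarrow> alg" where
  "ekl lam k l = ((bracket lam Yel) ^^ nat (int k - l)) (Xpow lam k)"

text \<open>f_{kl}: the polynomial with e_{kl} = X^l f_{kl}(H) (l >= 0), resp.
  e_{k,-l} = f_{k,-l}(H) Y^l; i.e. the weight-2l component of e_{kl}.\<close>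
definition fkl :: "complex \<Rightarrow> nat \<Rightarrow> int \<Rightarrow> complex poly" where
  "fkl lam k l = ekl lam k l l"

text \<open>Generating function of the moments tr(H^m), as a formal power series.\<close>
definition trgen :: "complex \<Rightarrow> complex fps" where
  "trgen lam = (if lam \<noteq> 0
      then (fps_exp lam - fps_exp (- lam)) / (fps_exp 1 - fps_exp (-1))
      else (2 * fps_X) / (fps_exp 1 - fps_exp (-1)))"

definition trH :: "complex \<Rightarrow> complex poly \<Rightarrow> complex" where
  "trH lam p = (\<Sum>m\<le>degree p. coeff p m * (fact m * fps_nth (trgen lam) m))"

definition tr :: "complex \<Rightarrow> alg \<Rightarrow> complex" where
  "tr lam u = trH lam (u 0)"

definition pairing :: "complex \<Rightarrow> alg \<Rightarrow> alg \<Rightarrow> complex" where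
  "pairing lam u v = tr lam (amult lam u v)"

definition form_l :: "complex \<Rightarrow> nat \<Rightarrow> complex poly \<Rightarrow> complex poly \<Rightarrow> complex" where
  "form_l lam l p q = trH lam (p * q * (\<Prod>i\<in>{1..l}. Tp lam (int i)))"

definition F32 :: "complex \<Rightarrow> nat \<Rightarrow> nat \<Rightarrow> complex poly" where
  "F32 lam k l = (\<Sum>i\<le>k - l.
      smult (pochhammer (of_int (int l - int k)) i * pochhammer (of_nat (l + k + 1)) i
             / (pochhammer (of_nat (l + 1)) i * pochhammer (of_nat (l + 1) - lam) i * fact i))
            (pochhammer [:(1 - lam) / 2, - 1/2:] i))"

end

theory Submission
  imports Defs
begin

lemma shiftp_0[simp]: "shiftp 0 p = p"
  by (simp add: shiftp_def)

lemma pcomp_lin: "pcompose [:b, 1:] [:a, 1:] = [:b + a, (1::complex):]"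
  by (simp add: pcompose_pCons)

lemma shiftp_shiftp: "shiftp a (shiftp b p) = shiftp (a + b) p"
  by (simp add: shiftp_def pcompose_assoc[symmetric] pcomp_lin add.commute)

lemma shiftp_add[simp]: "shiftp c (p + q) = shiftp c p + shiftp c q"
  by (simp add: shiftp_def pcompose_add)
lemma shiftp_diff[simp]: "shiftp c (p - q) = shiftp c p - shiftp c q"
  by (simp add: shiftp_def pcompose_diff)
lemma shiftp_uminus[simp]: "shiftp c (- p) = - shiftp c p"
  by (simp add: shiftp_def pcompose_uminus)
lemma shiftp_mult[simp]: "shiftp c (p * q) = shiftp c p * shiftp c q"
  by (simp add: shiftp_def pcompose_mult)
lemma shiftp_smult[simp]: "shiftp c (smult a p) = smult a (shiftp c p)"
  by (simp add: shiftp_def pcompose_smult)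
lemma shiftp_const[simp]: "shiftp c [:a:] = [:a:]"
  by (simp add: shiftp_def)
lemma shiftp_1[simp]: "shiftp c 1 = 1"
  by (simp add: shiftp_def pcompose_1)
lemma shiftp_zero[simp]: "shiftp c 0 = 0"
  by (simp add: shiftp_def)
lemma shiftp_prod: "shiftp c (prod f A) = prod (\<lambda>i. shiftp c (f i)) A"
  by (simp add: shiftp_def pcompose_prod)
lemma shiftp_sum: "shiftp c (sum f A) = sum (\<lambda>i. shiftp c (f i)) A"
  by (simp add: shiftp_def pcompose_sum)
lemma shiftp_power[simp]: "shiftp c (p ^ n) = shiftp c p ^ n"
  by (induction n) simp_all
lemma shiftp_lin[simp]: "shiftp c [:a, b:] = [:a + b * c, b:]"
  by (simp add: shiftp_def pcompose_pCons)
lemma degree_shiftp[simp]: "degree (shiftp c p) = degree p"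
  by (simp add: shiftp_def degree_pcompose)
lemma shiftp_eq0_iff[simp]: "shiftp c p = 0 \<longleftrightarrow> p = 0"
  by (metis add.right_neutral add_uminus_conv_diff diff_add_cancel shiftp_0 shiftp_shiftp shiftp_zero)

lemma shiftp_pCons: "shiftp c (pCons a p) = [:a:] + smult c (shiftp c p) + pCons 0 (shiftp c p)"
  by (simp add: shiftp_def pcompose_pCons algebra_simps)

lemma coeff_shiftp_aux:
  "\<forall>d. degree p \<le> d \<longrightarrow> coeff (shiftp c p) d = coeff p d \<and>
     (d > 0 \<longrightarrow> coeff (shiftp c p) (d - 1) = coeff p (d - 1) + c * of_nat d * coeff p d)"
proof (induction p)
  case 0
  then show ?case by simp
next
  case (pCons a p)
  show ?case
  proof (intro allI impI)
    fix d assume dq: "degree (pCons a p) \<le> d"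
    show "coeff (shiftp c (pCons a p)) d = coeff (pCons a p) d \<and>
     (d > 0 \<longrightarrow> coeff (shiftp c (pCons a p)) (d - 1) = coeff (pCons a p) (d - 1) + c * of_nat d * coeff (pCons a p) d)"
    proof (cases d)
      case 0
      then have "p = 0" using dq by (metis degree_pCons_eq_if le_zero_eq nat.distinct(1))
      then show ?thesis using 0 by simp
    next
      case (Suc e)
      have dp: "degree p \<le> e" using dq Suc
        by (cases "p = 0") auto
      have IH: "coeff (shiftp c p) e = coeff p e"
           "e > 0 \<Longrightarrow> coeff (shiftp c p) (e - 1) = coeff p (e - 1) + c * of_nat e * coeff p e"
        using pCons.IH dp by auto
      have z: "coeff (shiftp c p) (Suc e) = 0" "coeff p (Suc e) = 0"
        using dp by (simp_all add: coeff_eq_0)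
      have A: "coeff (shiftp c (pCons a p)) d = coeff (pCons a p) d"
        using Suc IH z by (simp add: shiftp_pCons)
      have B: "coeff (shiftp c (pCons a p)) (d - 1) = coeff (pCons a p) (d - 1) + c * of_nat d * coeff (pCons a p) d"
      proof (cases e)
        case 0
        have "coeff (shiftp c p) 0 = coeff p 0" using IH 0 by simp
        then show ?thesis using Suc 0 by (simp add: shiftp_pCons)
      next
        case (Suc f)
        then show ?thesis using \<open>d = Suc e\<close> IH by (simp add: shiftp_pCons algebra_simps)
      qed
      show ?thesis using A B by simp
    qed
  qed
qed

lemma coeff_shiftp_top: "degree p \<le> d \<Longrightarrow> coeff (shiftp c p) d = coeff p d"
  using coeff_shiftp_aux by blast

lemma coeff_shiftp_next: "degree p \<le> Suc d \<Longrightarrow>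
   coeff (shiftp c p) d = coeff p d + c * of_nat (Suc d) * coeff p (Suc d)"
  using coeff_shiftp_aux[of p c] by (metis diff_Suc_1 zero_less_Suc)

lemma Tp_explicit: "Tp lam i = [:(lam^2 - (2 * of_int i - 1)^2)/4, - (2 * of_int i - 1)/2, -1/4:]"
  by (simp add: Tp_def power2_eq_square algebra_simps)

lemma shiftp_Tp: "shiftp (2 * of_int j) (Tp lam i) = Tp lam (i + j)"
  by (simp add: Tp_def algebra_simps)

lemma shiftp_Tp2: "shiftp 2 (Tp lam i) = Tp lam (i + 1)"
  using shiftp_Tp[of 1 lam i] by simp

lemma shiftp_Tpm2: "shiftp (-2) (Tp lam i) = Tp lam (i - 1)"
  using shiftp_Tp[of "-1" lam i] by simp

definition Lop :: "complex \<Rightarrow> int \<Rightarrow> complex poly \<Rightarrow> complex poly" where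
  "Lop lam m f = Tp lam m * f - shiftp (-2) f * Tp lam 0"

definition Rop :: "complex poly \<Rightarrow> complex poly" where
  "Rop f = f - shiftp 2 f"

lemma Tp_comm: "Tp lam m + Tp lam 1 - Tp lam (m + 1) - Tp lam 0 = [:2 * of_int m:]"
  by (simp add: Tp_explicit field_simps power2_eq_square)

lemma Rop_Lop: "Rop (Lop lam m g) = Lop lam (m + 1) (Rop g) + smult (2 * of_int m) g"
proof -
  have e: "shiftp 2 (shiftp (-2) g) = g" by (simp add: shiftp_shiftp)
  have "Rop (Lop lam m g) = Tp lam m * g - shiftp (-2) g * Tp lam 0 - (Tp lam (m+1) * shiftp 2 g - g * Tp lam 1)"
    by (simp add: Rop_def Lop_def shiftp_Tp2 shiftp_shiftp)
  also have "\<dots> = Lop lam (m + 1) (Rop g) + (Tp lam m + Tp lam 1 - Tp lam (m + 1) - Tp lam 0) * g"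
    by (simp add: Rop_def Lop_def algebra_simps shiftp_shiftp)
  also have "\<dots> = Lop lam (m + 1) (Rop g) + smult (2 * of_int m) g"
    by (simp add: Tp_comm)
  finally show ?thesis .
qed

lemma Lop_add: "Lop lam m (f + g) = Lop lam m f + Lop lam m g"
  by (simp add: Lop_def algebra_simps)
lemma Lop_smult: "Lop lam m (smult a f) = smult a (Lop lam m f)"
  by (simp add: Lop_def smult_diff_right)
lemma Lop_diff: "Lop lam m (f - g) = Lop lam m f - Lop lam m g"
  by (simp add: Lop_def algebra_simps)
lemma Rop_add: "Rop (f + g) = Rop f + Rop g"
  by (simp add: Rop_def algebra_simps)
lemma Rop_smult: "Rop (smult a f) = smult a (Rop f)"
  by (simp add: Rop_def smult_diff_right)
lemma Rop_diff: "Rop (f - g) = Rop f - Rop g"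
  by (simp add: Rop_def algebra_simps)
lemma Rop_uminus: "Rop (- f) = - Rop f"
  by (simp add: Rop_def algebra_simps)

lemma coeff_lin_mult: "coeff ([:a, b:] * q) (Suc n) = a * coeff q (Suc n) + b * coeff q n"
  by simp

lemma coeff_quad_mult: "coeff ([:a, b, c:] * q) (Suc (Suc n)) =
   a * coeff q (Suc (Suc n)) + b * coeff q (Suc n) + c * coeff q n"
  by (simp add: algebra_simps)

lemma diff_shift_const: "degree y = 0 \<Longrightarrow> y - shiftp c y = 0"
  by (metis cancel_comm_monoid_add_class.diff_cancel degree_0_id shiftp_const)

lemma diff_shift_deg:
  assumes "degree y \<le> Suc e"
  shows "degree (y - shiftp c y) \<le> e"
    and "coeff (y - shiftp c y) e = - c * of_nat (Suc e) * coeff y (Suc e)"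
proof -
  show "degree (y - shiftp c y) \<le> e"
  proof (rule degree_le, intro allI impI)
    fix i assume "e < i"
    then show "coeff (y - shiftp c y) i = 0"
    proof (cases "i = Suc e")
      case True
      then show ?thesis using coeff_shiftp_top[OF assms, of c] by simp
    next
      case False
      then have "i > Suc e" using \<open>e < i\<close> by simp
      then have "coeff y i = 0" "coeff (shiftp c y) i = 0"
        using assms by (simp_all add: coeff_eq_0)
      then show ?thesis by simp
    qed
  qed
  show "coeff (y - shiftp c y) e = - c * of_nat (Suc e) * coeff y (Suc e)"
    using coeff_shiftp_next[OF assms, of c] by simp
qed

lemma Rop_deg:
  assumes "degree g \<le> Suc e"
  shows "degree (Rop g) \<le> e" "coeff (Rop g) e = - 2 * of_nat (Suc e) * coeff g (Suc e)"
  using diff_shift_deg[OF assms, of 2] by (simp_all add: Rop_def)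

lemma Rop_const: "degree g = 0 \<Longrightarrow> Rop g = 0"
  by (simp add: Rop_def diff_shift_const)

lemma Rop_0[simp]: "Rop 0 = 0"
  by (simp add: Rop_def)

lemma Rop_pow_0: "degree g < n \<Longrightarrow> (Rop ^^ n) g = 0"
proof (induction n arbitrary: g)
  case 0
  then show ?case by simp
next
  case (Suc n)
  show ?case
  proof (cases "degree g")
    case 0
    then have "Rop g = 0" by (rule Rop_const)
    moreover have "(Rop ^^ n) 0 = 0" by (induction n) simp_all
    ultimately show ?thesis by (simp add: funpow_Suc_right del: funpow.simps)
  next
    case (Suc e)
    then have "degree (Rop g) \<le> e" using Rop_deg(1)[of g e] by simp
    then have "degree (Rop g) < n" using Suc.prems Suc by simp
    then have "(Rop ^^ n) (Rop g) = 0" by (rule Suc.IH)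
    then show ?thesis by (simp add: funpow_Suc_right del: funpow.simps)
  qed
qed

lemma Tp_diff0: "Tp lam m - Tp lam 0 = [:(1 - (2 * of_int m - 1)^2)/4, - of_int m:]"
  by (simp add: Tp_explicit field_simps)

lemma Tp0_explicit: "Tp lam 0 = [:(lam^2 - 1)/4, 1/2, -1/4:]"
  by (simp add: Tp_explicit)

lemma Lop_split: "Lop lam m y = (Tp lam m - Tp lam 0) * y + Tp lam 0 * (y - shiftp (-2) y)"
  by (simp add: Lop_def algebra_simps)

lemma Lop_deg:
  assumes "degree y \<le> d"
  shows "degree (Lop lam m y) \<le> Suc d"
    "coeff (Lop lam m y) (Suc d) = - (of_nat d / 2 + of_int m) * coeff y d"
proof -
  define D where "D = y - shiftp (-2) y"
  have LS: "Lop lam m y = (Tp lam m - Tp lam 0) * y + Tp lam 0 * D"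
    by (simp add: Lop_split D_def)
  have dA: "degree (Tp lam m - Tp lam 0) \<le> 1"
    by (simp add: Tp_diff0)
  have cA: "coeff ((Tp lam m - Tp lam 0) * y) (Suc d) = - of_int m * coeff y d"
    using assms by (simp add: Tp_diff0 coeff_eq_0)
  show "degree (Lop lam m y) \<le> Suc d"
    "coeff (Lop lam m y) (Suc d) = - (of_nat d / 2 + of_int m) * coeff y d"
  proof (atomize(full), cases d)
    case 0
    then have "degree y = 0" using assms by simp
    then have "D = 0" by (simp add: D_def diff_shift_const)
    then show "degree (Lop lam m y) \<le> Suc d \<and> coeff (Lop lam m y) (Suc d) = - (of_nat d / 2 + of_int m) * coeff y d"
      using LS cA 0 dA assms degree_mult_le[of "Tp lam m - Tp lam 0" y] by simp
  next
    case (Suc e)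
    have dD: "degree D \<le> e" and cD: "coeff D e = 2 * of_nat d * coeff y d"
      using diff_shift_deg[of y e "-2"] assms Suc by (simp_all add: D_def)
    have d0: "degree (Tp lam 0) \<le> 2" by (simp add: Tp0_explicit)
    have cB: "coeff (Tp lam 0 * D) (Suc d) = - (of_nat d / 2) * coeff y d"
      using dD cD Suc by (simp add: Tp0_explicit coeff_eq_0)
    have "degree ((Tp lam m - Tp lam 0) * y) \<le> Suc d"
      using dA assms degree_mult_le[of "Tp lam m - Tp lam 0" y] by simp
    moreover have "degree (Tp lam 0 * D) \<le> Suc d"
      using d0 dD Suc degree_mult_le[of "Tp lam 0" D] by simp
    ultimately have "degree (Lop lam m y) \<le> Suc d"
      unfolding LS by (meson degree_add_le)
    moreover have "coeff (Lop lam m y) (Suc d) = - (of_nat d / 2 + of_int m) * coeff y d"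
      unfolding LS using cA cB by (simp add: algebra_simps)
    ultimately show "degree (Lop lam m y) \<le> Suc d \<and> coeff (Lop lam m y) (Suc d) = - (of_nat d / 2 + of_int m) * coeff y d"
      by simp
  qed
qed

lemma supp_hom: "supp (hom a f) = (if f = 0 then {} else {a})"
  by (auto simp: supp_def hom_def)

lemma hprod_0_left[simp]: "hprod lam a 0 b g = 0"
  by (simp add: hprod_def)
lemma hprod_0_right[simp]: "hprod lam a f b 0 = 0"
  by (simp add: hprod_def)

lemma hom_0[simp]: "hom a 0 = (\<lambda>n. 0)"
  by (simp add: hom_def fun_eq_iff)

lemma amult_hom: "amult lam (hom a f) (hom b g) = hom (a + b) (hprod lam a f b g)"
proof (cases "f = 0 \<or> g = 0")
  case True
  then show ?thesis by (auto simp: amult_def supp_hom)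
next
  case False
  have "amult lam (hom a f) (hom b g) = (\<lambda>n. if a + b = n then hprod lam a (hom a f a) b (hom b g b) else 0)"
    unfolding amult_def supp_hom using False by simp
  then show ?thesis by (auto simp: hom_def fun_eq_iff)
qed

lemma bracket_hom: "bracket lam (hom a f) (hom b g) = hom (a + b) (hprod lam a f b g - hprod lam b g a f)"
  by (simp only: bracket_def amult_hom) (simp add: hom_def fun_eq_iff add.commute)

lemma YXp_1: "YXp lam (Suc 0) = Tp lam 1" by (simp add: YXp_def)
lemma XYp_1: "XYp lam (Suc 0) = Tp lam 0" by (simp add: XYp_def)
lemma YXp_0: "YXp lam 0 = 1" by (simp add: YXp_def)
lemma XYp_0: "XYp lam 0 = 1" by (simp add: XYp_def)

lemma hp1: "m \<ge> 1 \<Longrightarrow> hprod lam (-1) 1 m f = Tp lam m * f"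
proof -
  assume m: "m \<ge> 1"
  have "shiftp (of_int (2 * (m + -1))) (Tp lam 1) = Tp lam m"
    using shiftp_Tp[of "m - 1" lam 1] by simp
  then show ?thesis using m by (simp add: hprod_def YXp_1)
qed

lemma hp2: "m \<ge> 1 \<Longrightarrow> hprod lam m f (-1) 1 = shiftp (-2) f * Tp lam 0"
  by (simp add: hprod_def XYp_1)

lemma hp3: "m \<le> 0 \<Longrightarrow> hprod lam (-1) 1 m f = shiftp 2 f"
  by (cases "m = 0") (simp_all add: hprod_def YXp_0)

lemma hp4: "m \<le> 0 \<Longrightarrow> hprod lam m f (-1) 1 = f"
  by (cases "m = 0") (simp_all add: hprod_def XYp_0)

fun Qs :: "complex \<Rightarrow> nat \<Rightarrow> nat \<Rightarrow> complex poly" where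
  "Qs lam k 0 = 1"
| "Qs lam k (Suc j) = (if j < k then Lop lam (int k - int j) (Qs lam k j) else - Rop (Qs lam k j))"

lemma bracket_Y: "bracket lam Yel (hom m f) =
   hom (m - 1) (if m \<ge> 1 then Lop lam m f else - Rop f)"
  by (simp add: Yel_def bracket_hom hp1 hp2 hp3 hp4 Lop_def Rop_def algebra_simps)

lemma Xpow_hom: "Xpow lam k = hom (int k) 1"
proof (induction k)
  case 0
  then show ?case by (simp add: Xpow_def)
next
  case (Suc k)
  have "Xpow lam (Suc k) = amult lam Xel (Xpow lam k)"
    by (simp add: Xpow_def)
  also have "\<dots> = hom (1 + int k) (hprod lam 1 1 (int k) 1)"
    by (simp add: Suc Xel_def amult_hom)
  also have "hprod lam 1 1 (int k) 1 = 1" by (simp add: hprod_def)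
  finally show ?case by (simp add: add.commute)
qed

lemma brY_pow: "((bracket lam Yel) ^^ j) (Xpow lam k) = hom (int k - int j) (Qs lam k j)"
proof (induction j)
  case 0
  then show ?case by (simp add: Xpow_hom)
next
  case (Suc j)
  show ?case
    using Suc by (simp add: bracket_Y algebra_simps)
qed

lemma ekl_hom: "l \<le> int k \<Longrightarrow> ekl lam k l = hom l (Qs lam k (nat (int k - l)))"
  by (simp add: ekl_def brY_pow)

lemma fkl_Qs: "l \<le> int k \<Longrightarrow> fkl lam k l = Qs lam k (nat (int k - l))"
  by (simp add: fkl_def ekl_hom hom_def)

lemma pairing_hom: "pairing lam (hom a f) (hom b g) = (if a + b = 0 then trH lam (hprod lam a f b g) else 0)"
proof -
  have z: "trH lam 0 = 0" by (simp add: trH_def)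
  show ?thesis by (simp only: pairing_def tr_def amult_hom) (simp add: hom_def z)
qed

definition phi :: "complex fps \<Rightarrow> complex poly \<Rightarrow> complex" where
  "phi G p = (\<Sum>m\<le>degree p. coeff p m * (fact m * G $ m))"

lemma trH_phi: "trH lam p = phi (trgen lam) p"
  by (simp add: trH_def phi_def)

lemma phi_bound: "degree p \<le> N \<Longrightarrow> phi G p = (\<Sum>m\<le>N. coeff p m * (fact m * G $ m))"
  unfolding phi_def
  by (rule sum.mono_neutral_left) (auto simp: coeff_eq_0)

lemma phi_0[simp]: "phi G 0 = 0"
  by (simp add: phi_def)

lemma phi_add: "phi G (p + q) = phi G p + phi G q"
proof -
  define N where "N = max (degree p) (degree q)"
  have "degree (p + q) \<le> N" "degree p \<le> N" "degree q \<le> N"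
    using degree_add_le_max[of p q] by (auto simp: N_def)
  then show ?thesis by (simp add: phi_bound[where N=N] sum.distrib algebra_simps)
qed

lemma phi_smult: "phi G (smult a p) = a * phi G p"
  by (cases "a = 0") (simp_all add: phi_def sum_distrib_left algebra_simps)

lemma phi_uminus: "phi G (- p) = - phi G p"
  using phi_smult[of G "-1" p] by simp

lemma phi_diff: "phi G (p - q) = phi G p - phi G q"
  using phi_add[of G p "- q"] phi_uminus[of G q] by simp

lemma phi_sum: "phi G (sum f A) = (\<Sum>i\<in>A. phi G (f i))"
  by (induction A rule: infinite_finite_induct) (simp_all add: phi_add)

lemma phi_addG: "phi (G1 + G2) p = phi G1 p + phi G2 p"
  by (simp add: phi_def sum.distrib algebra_simps)

lemma phi_diffG: "phi (G1 - G2) p = phi G1 p - phi G2 p"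
  by (simp add: phi_def sum_subtractf algebra_simps)

lemma phi_constG: "phi (fps_const c * G) p = c * phi G p"
  by (simp add: phi_def sum_distrib_left algebra_simps)

lemma phi_zeroG[simp]: "phi 0 p = 0"
  by (simp add: phi_def)

lemma phi_pCons: "phi G (pCons a p) = a * G $ 0 + phi (fps_deriv G) p"
proof -
  have "phi G (pCons a p) = (\<Sum>m\<le>Suc (degree p). coeff (pCons a p) m * (fact m * G $ m))"
    by (rule phi_bound) (simp add: degree_pCons_le)
  also have "\<dots> = (\<Sum>m\<le>degree p. coeff (pCons a p) (Suc m) * (fact (Suc m) * G $ (Suc m))) + a * G $ 0"
    by (subst sum.atMost_Suc_shift) simp
  also have "(\<Sum>m\<le>degree p. coeff (pCons a p) (Suc m) * (fact (Suc m) * G $ (Suc m))) = phi (fps_deriv G) p"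
    by (simp add: phi_def algebra_simps)
  finally show ?thesis by simp
qed

lemma phi_shift: "phi G (shiftp c p) = phi (fps_exp c * G) p"
proof (induction p arbitrary: G)
  case 0
  then show ?case by (simp add: phi_def)
next
  case (pCons a p)
  have "phi G (shiftp c (pCons a p)) = a * G $ 0 + c * phi G (shiftp c p) + phi (fps_deriv G) (shiftp c p)"
    by (simp add: shiftp_pCons phi_add phi_smult phi_pCons)
  also have "\<dots> = a * G $ 0 + c * phi (fps_exp c * G) p + phi (fps_exp c * fps_deriv G) p"
    by (simp add: pCons.IH)
  also have "\<dots> = phi (fps_exp c * G) (pCons a p)"
  proof -
    have d: "fps_deriv (fps_exp c * G) = fps_exp c * fps_deriv G + fps_const c * (fps_exp c * G)"
      by (simp add: mult.assoc)
    have "phi (fps_exp c * G) (pCons a p) = a * G $ 0 + (phi (fps_exp c * fps_deriv G) p + c * phi (fps_exp c * G) p)"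
      by (simp add: phi_pCons d phi_addG phi_constG del: fps_deriv_mult)
    then show ?thesis by (simp add: algebra_simps)
  qed
  finally show ?case .
qed

lemma phi_exp: "phi (fps_exp a) q = poly q a"
  by (simp add: phi_def poly_altdef)

lemma phi_2X: "phi (2 * fps_X) q = 2 * coeff q 1"
proof -
  obtain a q1 where q: "q = pCons a q1" by (cases q) auto
  obtain b r where q1: "q1 = pCons b r" by (cases q1) auto
  have d: "fps_deriv (2 * fps_X :: complex fps) = 2" by simp
  have "phi (2 * fps_X) q = phi 2 (pCons b r)"
    by (simp add: q q1 phi_pCons d del: fps_deriv_mult)
  also have "\<dots> = 2 * b"
    by (simp add: phi_pCons)
  finally show ?thesis by (simp add: q q1)
qed

definition Nser :: "complex \<Rightarrow> complex fps" where
  "Nser lam = (if lam \<noteq> 0 then fps_exp lam - fps_exp (- lam) else 2 * fps_X)"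

lemma trgen_eq: "(fps_exp 1 - fps_exp (-1)) * trgen lam = Nser lam"
proof -
  define den :: "complex fps" where "den = fps_exp 1 - fps_exp (-1)"
  have den1: "den $ 1 = 2" by (simp add: den_def)
  have den0: "den $ 0 = 0" by (simp add: den_def)
  have dnz: "den \<noteq> 0" using den1 by auto
  have sd: "subdegree den = 1"
  proof (rule antisym)
    show "subdegree den \<le> 1" using den1 by (intro subdegree_leI) simp
    show "1 \<le> subdegree den" using dnz den0 by (intro subdegree_geI) auto
  qed
  have N1: "Nser lam $ 1 \<noteq> 0" by (simp add: Nser_def)
  have N0: "Nser lam $ 0 = 0" by (simp add: Nser_def)
  have Nnz: "Nser lam \<noteq> 0" using N1 by auto
  have sN: "subdegree (Nser lam) \<ge> 1" using Nnz N0 by (intro subdegree_geI) auto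
  have tg: "trgen lam = Nser lam / den" by (simp add: trgen_def Nser_def den_def)
  have "Nser lam / den * den = Nser lam"
    by (rule fps_times_divide_eq) (use dnz sd sN in auto)
  then show ?thesis by (simp add: tg den_def mult.commute)
qed

lemma trH_D: "trH lam (shiftp 1 q) - trH lam (shiftp (-1) q) = phi (Nser lam) q"
proof -
  have "trH lam (shiftp 1 q) - trH lam (shiftp (-1) q) =
        phi (fps_exp 1 * trgen lam) q - phi (fps_exp (-1) * trgen lam) q"
    by (simp add: trH_phi phi_shift)
  also have "\<dots> = phi ((fps_exp 1 - fps_exp (-1)) * trgen lam) q"
    by (simp add: phi_diffG algebra_simps)
  finally show ?thesis by (simp add: trgen_eq)
qed

lemma shiftp1_Tp0: "shiftp 1 (Tp lam 0) = [:lam^2/4, 0, -1/4:]"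
  by (simp only: Tp_def shiftp_smult shiftp_diff shiftp_const shiftp_power shiftp_lin) (simp add: power2_eq_square)

lemma trH_TR: "trH lam (shiftp 2 (Tp lam 0 * s)) = trH lam (Tp lam 0 * s)"
proof -
  define q where "q = shiftp 1 (Tp lam 0 * s)"
  have e1: "shiftp 2 (Tp lam 0 * s) = shiftp 1 q"
    by (simp add: q_def shiftp_shiftp del: shiftp_mult)
  have e2: "Tp lam 0 * s = shiftp (-1) q"
    by (simp add: q_def shiftp_shiftp del: shiftp_mult)
  have qf: "q = [:lam^2/4, 0, -1/4:] * shiftp 1 s"
    by (simp add: q_def shiftp1_Tp0 del: shiftp_lin)
  have "phi (Nser lam) q = 0"
  proof (cases "lam = 0")
    case True
    then show ?thesis by (simp add: Nser_def phi_2X qf)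
  next
    case False
    then show ?thesis by (simp add: Nser_def phi_diffG phi_exp qf power2_eq_square)
  qed
  then show ?thesis using trH_D[of lam q] e1 e2 by simp
qed

definition W :: "complex \<Rightarrow> nat \<Rightarrow> complex poly" where
  "W lam l = (\<Prod>i\<in>{1..l}. Tp lam (int i))"

definition B :: "complex \<Rightarrow> nat \<Rightarrow> complex poly \<Rightarrow> complex poly \<Rightarrow> complex" where
  "B lam l f g = trH lam (f * g * W lam l)"

lemma W_0[simp]: "W lam 0 = 1" by (simp add: W_def)

lemma W_Suc: "W lam (Suc l) = W lam l * Tp lam (int (Suc l))"
  by (simp add: W_def prod.nat_ivl_Suc' mult.commute)

lemma W_Suc': "W lam (Suc l) = Tp lam 1 * shiftp 2 (W lam l)"
proof (induction l)
  case 0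
  then show ?case by (simp add: W_def)
next
  case (Suc l)
  have "W lam (Suc (Suc l)) = W lam (Suc l) * Tp lam (int (Suc (Suc l)))" by (rule W_Suc)
  also have "\<dots> = Tp lam 1 * (shiftp 2 (W lam l) * shiftp 2 (Tp lam (int (Suc l))))"
    by (simp add: Suc shiftp_Tp2 algebra_simps)
  also have "\<dots> = Tp lam 1 * shiftp 2 (W lam (Suc l))"
    by (simp add: W_Suc)
  finally show ?case .
qed

lemma trH_add: "trH lam (p + q) = trH lam p + trH lam q"
  by (simp add: trH_phi phi_add)
lemma trH_diff: "trH lam (p - q) = trH lam p - trH lam q"
  by (simp add: trH_phi phi_diff)
lemma trH_smult: "trH lam (smult a p) = a * trH lam p"
  by (simp add: trH_phi phi_smult)
lemma trH_0[simp]: "trH lam 0 = 0"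
  by (simp add: trH_phi)

lemma B_comm: "B lam l f g = B lam l g f"
  by (simp add: B_def mult.commute)

lemma B_smult_right: "B lam l f (smult a g) = a * B lam l f g"
  by (simp add: B_def trH_smult)

lemma B_zero_right[simp]: "B lam l f 0 = 0"
  by (simp add: B_def)

lemma B_adj: "B lam l (Lop lam (int (Suc l)) f) g = B lam (Suc l) f (Rop g)"
proof -
  define s where "s = shiftp (-2) f * g * W lam l"
  have e1: "B lam l (Lop lam (int (Suc l)) f) g = trH lam (f * g * W lam (Suc l)) - trH lam (Tp lam 0 * s)"
    by (simp add: B_def Lop_def s_def W_Suc trH_diff[symmetric] algebra_simps)
  have "trH lam (Tp lam 0 * s) = trH lam (shiftp 2 (Tp lam 0 * s))"
    by (rule trH_TR[symmetric])
  also have "shiftp 2 (Tp lam 0 * s) = f * shiftp 2 g * W lam (Suc l)"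
    by (simp add: s_def shiftp_shiftp shiftp_Tp2 W_Suc' algebra_simps)
  finally have e2: "trH lam (Tp lam 0 * s) = trH lam (f * shiftp 2 g * W lam (Suc l))" .
  have e3: "B lam (Suc l) f (Rop g) = trH lam (f * g * W lam (Suc l)) - trH lam (f * shiftp 2 g * W lam (Suc l))"
    by (simp add: B_def Rop_def trH_diff[symmetric] algebra_simps)
  show ?thesis
    by (simp only: e1 e2 e3)
qed

lemma Qs_Suc_lt: "j < k \<Longrightarrow> Qs lam k (Suc j) = Lop lam (int k - int j) (Qs lam k j)"
  by simp

lemma claimA: "d \<le> k \<Longrightarrow> B lam (k - d) (Qs lam k d) g = B lam k 1 ((Rop ^^ d) g)"
proof (induction d arbitrary: g)
  case 0
  then show ?case by (simp add: Qs.simps)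
next
  case (Suc d)
  have e: "int k - int d = int (Suc (k - Suc d))" using Suc.prems by simp
  have q: "Qs lam k (Suc d) = Lop lam (int (Suc (k - Suc d))) (Qs lam k d)"
  proof -
    have "Qs lam k (Suc d) = Lop lam (int k - int d) (Qs lam k d)"
      by (rule Qs_Suc_lt) (use Suc.prems in simp)
    then show ?thesis by (simp only: e)
  qed
  have kd: "Suc (k - Suc d) = k - d" using Suc.prems by simp
  have "B lam (k - Suc d) (Qs lam k (Suc d)) g = B lam (k - Suc d) (Lop lam (int (Suc (k - Suc d))) (Qs lam k d)) g"
    by (simp only: q)
  also have "\<dots> = B lam (Suc (k - Suc d)) (Qs lam k d) (Rop g)"
    by (rule B_adj)
  also have "\<dots> = B lam (k - d) (Qs lam k d) (Rop g)"
    by (simp only: kd)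
  also have "\<dots> = B lam k 1 ((Rop ^^ d) (Rop g))"
    using Suc.IH[of "Rop g"] Suc.prems by simp
  finally show ?case by (simp add: funpow_Suc_right del: funpow.simps)
qed

lemma claimB: "l \<le> k \<Longrightarrow> B lam l (Qs lam k (k - l)) ((Rop ^^ l) h) = B lam 0 (Qs lam k k) h"
proof (induction l)
  case 0
  then show ?case by simp
next
  case (Suc l)
  have e: "Qs lam k (k - l) = Lop lam (int (Suc l)) (Qs lam k (k - Suc l))"
  proof -
    have a: "k - l = Suc (k - Suc l)" using Suc.prems by simp
    have b: "int k - int (k - Suc l) = int (Suc l)" using Suc.prems by simp
    have "Qs lam k (Suc (k - Suc l)) = Lop lam (int k - int (k - Suc l)) (Qs lam k (k - Suc l))"
      by (rule Qs_Suc_lt) (use Suc.prems in simp)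
    then show ?thesis by (simp only: a b)
  qed
  have "B lam (Suc l) (Qs lam k (k - Suc l)) ((Rop ^^ Suc l) h) = B lam (Suc l) (Qs lam k (k - Suc l)) (Rop ((Rop ^^ l) h))"
    by simp
  also have "\<dots> = B lam l (Qs lam k (k - l)) ((Rop ^^ l) h)"
    by (simp only: e B_adj)
  also have "\<dots> = B lam 0 (Qs lam k k) h" using Suc.IH Suc.prems by simp
  finally show ?case .
qed

lemma claimC: "Qs lam k (k + n) = smult ((-1) ^ n) ((Rop ^^ n) (Qs lam k k))"
proof (induction n)
  case 0
  then show ?case by simp
next
  case (Suc n)
  have "Qs lam k (k + Suc n) = - Rop (Qs lam k (k + n))" by simp
  also have "\<dots> = smult ((-1) ^ Suc n) ((Rop ^^ Suc n) (Qs lam k k))"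
    by (simp add: Suc Rop_smult)
  finally show ?case .
qed

lemma Qs_deg: "j \<le> k \<Longrightarrow> degree (Qs lam k j) \<le> j \<and> coeff (Qs lam k j) j \<noteq> 0"
proof (induction j)
  case 0
  then show ?case by simp
next
  case (Suc j)
  then have IH: "degree (Qs lam k j) \<le> j" "coeff (Qs lam k j) j \<noteq> 0" by auto
  have jk: "j < k" using Suc.prems by simp
  have nz: "of_nat j / 2 + of_int (int k - int j) \<noteq> (0::complex)"
  proof
    assume "of_nat j / 2 + of_int (int k - int j) = (0::complex)"
    then have "(of_int (2 * int k - int j) :: complex) = 0" by (simp add: field_simps)
    then have "(of_nat (2 * k) :: complex) = of_nat j" by simp
    then have "2 * k = j" using of_nat_eq_iff by blast
    then show False using jk by simp
  qed
  have q: "Qs lam k (Suc j) = Lop lam (int k - int j) (Qs lam k j)" by (rule Qs_Suc_lt[OF jk])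
  note L = Lop_deg[OF IH(1), of lam "int k - int j"]
  have c: "coeff (Qs lam k (Suc j)) (Suc j) \<noteq> 0"
    unfolding q L(2) using IH(2) nz by simp
  show ?case
    unfolding q using L(1) c[unfolded q] by simp
qed

lemma orth_l: "l \<le> k \<Longrightarrow> l \<le> k' \<Longrightarrow> k \<noteq> k' \<Longrightarrow> B lam l (Qs lam k (k - l)) (Qs lam k' (k' - l)) = 0"
proof -
  have main: "B lam l (Qs lam k (k - l)) (Qs lam k' (k' - l)) = 0" if "l \<le> k" "l \<le> k'" "k' < k" for k k'
  proof -
    have "B lam l (Qs lam k (k - l)) (Qs lam k' (k' - l)) = B lam k 1 ((Rop ^^ (k - l)) (Qs lam k' (k' - l)))"
      using claimA[of "k - l" k lam] that by simp
    also have "(Rop ^^ (k - l)) (Qs lam k' (k' - l)) = 0"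
    proof (rule Rop_pow_0)
      have "degree (Qs lam k' (k' - l)) \<le> k' - l" using Qs_deg[of "k' - l" k' lam] by simp
      then show "degree (Qs lam k' (k' - l)) < k - l" using that by linarith
    qed
    finally show ?thesis by simp
  qed
  assume a: "l \<le> k" "l \<le> k'" "k \<noteq> k'"
  show ?thesis
  proof (cases "k' < k")
    case True
    then show ?thesis using main a by simp
  next
    case False
    then have "k < k'" using a by simp
    then show ?thesis using main[of k' k] a B_comm by metis
  qed
qed

lemma shiftp_Tp_neg: "shiftp (-2 * of_nat m) (Tp lam i) = Tp lam (i - int m)"
  using shiftp_Tp[of "- int m" lam i] by simp

lemma XYp_Suc: "XYp lam (Suc n) = XYp lam n * Tp lam (- int n)"
  by (simp add: XYp_def)

lemma XYp_shift: "XYp lam n = shiftp (-2 * of_nat n) (W lam n)"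
proof (induction n)
  case 0
  then show ?case by (simp add: XYp_def)
next
  case (Suc n)
  have t: "shiftp (-2 * of_nat (Suc n)) (Tp lam 1) = Tp lam (- int n)"
    using shiftp_Tp_neg[of "Suc n" lam 1] by simp
  have s: "shiftp (-2 * of_nat (Suc n)) (shiftp 2 (W lam n)) = shiftp (-2 * of_nat n) (W lam n)"
    by (simp add: shiftp_shiftp algebra_simps)
  have "shiftp (-2 * of_nat (Suc n)) (W lam (Suc n)) = Tp lam (- int n) * XYp lam n"
    by (simp only: W_Suc' shiftp_mult t s Suc)
  then show ?case by (simp add: XYp_Suc mult.commute)
qed

lemma YXp_W: "YXp lam n = W lam n"
  by (simp add: YXp_def W_def)

lemma trH_TR2: "trH lam (shiftp 2 (Tp lam 0 * s)) = trH lam (Tp lam 0 * s)"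
  by (rule trH_TR)

lemma trH_shiftW: "trH lam (shiftp (-2 * of_nat n) (p * W lam n)) = trH lam (p * W lam n)"
proof (induction n arbitrary: p)
  case 0
  then show ?case by simp
next
  case (Suc n)
  define p' where "p' = shiftp (-2) p * Tp lam 0"
  have e1: "shiftp (-2 * of_nat (Suc n)) (p * W lam (Suc n)) = shiftp (-2 * of_nat n) (p' * W lam n)"
  proof -
    have "shiftp (-2 * of_nat (Suc n)) (p * W lam (Suc n)) = shiftp (-2 * of_nat n) (shiftp (-2) (p * W lam (Suc n)))"
      by (simp add: shiftp_shiftp algebra_simps del: shiftp_mult)
    also have "shiftp (-2) (p * W lam (Suc n)) = p' * W lam n"
      by (simp add: W_Suc' p'_def shiftp_shiftp shiftp_Tpm2)
    finally show ?thesis .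
  qed
  have "trH lam (p' * W lam n) = trH lam (Tp lam 0 * (shiftp (-2) p * W lam n))"
    by (simp add: p'_def algebra_simps)
  also have "\<dots> = trH lam (shiftp 2 (Tp lam 0 * (shiftp (-2) p * W lam n)))"
    by (rule trH_TR[symmetric])
  also have "shiftp 2 (Tp lam 0 * (shiftp (-2) p * W lam n)) = p * W lam (Suc n)"
    by (simp add: W_Suc' shiftp_shiftp shiftp_Tp2 algebra_simps)
  finally show ?case using Suc.IH[of p'] e1 by simp
qed

lemma hprod_pos_neg: "hprod lam (int n) f (- int n) g = shiftp (-2 * of_nat n) (f * g) * XYp lam n"
  by (cases "n = 0") (simp_all add: hprod_def XYp_def)

lemma hprod_neg_pos: "hprod lam (- int n) f (int n) g = f * W lam n * g"
  by (cases "n = 0") (simp_all add: hprod_def YXp_W)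

lemma trH_pos_neg: "trH lam (hprod lam (int n) f (- int n) g) = B lam n f g"
proof -
  have "hprod lam (int n) f (- int n) g = shiftp (-2 * of_nat n) (f * g * W lam n)"
    by (simp add: hprod_pos_neg XYp_shift)
  then show ?thesis using trH_shiftW[of lam n "f * g"] by (simp add: B_def del: shiftp_mult)
qed

lemma trH_neg_pos: "trH lam (hprod lam (- int n) f (int n) g) = B lam n g f"
  by (simp add: hprod_neg_pos B_def algebra_simps)

lemma orthI: "n \<le> k \<Longrightarrow> n \<le> k' \<Longrightarrow> k \<noteq> k' \<Longrightarrow> B lam n (Qs lam k (k - n)) (Qs lam k' (k' + n)) = 0"
proof -
  assume a: "n \<le> k" "n \<le> k'" "k \<noteq> k'"
  have "B lam n (Qs lam k (k - n)) (Qs lam k' (k' + n)) =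
        (-1) ^ n * B lam n (Qs lam k (k - n)) ((Rop ^^ n) (Qs lam k' k'))"
    by (simp add: claimC B_smult_right)
  also have "B lam n (Qs lam k (k - n)) ((Rop ^^ n) (Qs lam k' k')) = B lam 0 (Qs lam k k) (Qs lam k' k')"
    using claimB[OF a(1)] by simp
  also have "\<dots> = 0" using orth_l[of 0 k k' lam] a by simp
  finally show ?thesis by simp
qed

lemma part1:
  assumes "\<bar>l\<bar> \<le> int k" "\<bar>l'\<bar> \<le> int k'" "\<not> (k = k' \<and> l + l' = 0)"
  shows "pairing lam (ekl lam k l) (ekl lam k' l') = 0"
proof -
  have h: "ekl lam k l = hom l (Qs lam k (nat (int k - l)))" "ekl lam k' l' = hom l' (Qs lam k' (nat (int k' - l')))"
    using assms by (simp_all add: ekl_hom)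
  have P: "pairing lam (ekl lam k l) (ekl lam k' l') = (if l + l' = 0 then
     trH lam (hprod lam l (Qs lam k (nat (int k - l))) l' (Qs lam k' (nat (int k' - l')))) else 0)"
    unfolding h by (rule pairing_hom)
  show ?thesis
  proof (cases "l + l' = 0")
    case False
    then show ?thesis by (simp add: P)
  next
    case True
    then have kk: "k \<noteq> k'" and l': "l' = - l" using assms by auto
    show ?thesis
    proof (cases "l \<ge> 0")
      case True
      define n where "n = nat l"
      have ln: "l = int n" "l' = - int n" using True l' by (simp_all add: n_def)
      have n1: "nat (int k - l) = k - n" "nat (int k' - l') = k' + n" "n \<le> k" "n \<le> k'"
        using assms ln by auto
      show ?thesis
        unfolding P using ln n1 kk by (simp add: trH_pos_neg orthI)
    next
      case False
      define n where "n = nat (- l)"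
      have ln: "l = - int n" "l' = int n" using False l' by (simp_all add: n_def)
      have n1: "nat (int k - l) = k + n" "nat (int k' - l') = k' - n" "n \<le> k" "n \<le> k'"
        using assms ln by auto
      have kk': "k' \<noteq> k" using kk by simp
      show ?thesis
        unfolding P using ln n1 kk' by (simp add: trH_neg_pos orthI)
    qed
  qed
qed

lemma basis_exists:
  fixes b :: "nat \<Rightarrow> complex poly"
  assumes hb: "\<And>k. l \<le> k \<Longrightarrow> degree (b k) \<le> k - l \<and> coeff (b k) (k - l) \<noteq> 0"
  shows "\<forall>p. (\<forall>i\<ge>d. coeff p i = 0) \<longrightarrow>
     (\<exists>c. (\<forall>k. c k \<noteq> 0 \<longrightarrow> l \<le> k \<and> k < l + d) \<and> p = (\<Sum>k\<in>{l..<l+d}. smult (c k) (b k)))"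
proof (induction d)
  case 0
  show ?case
  proof (intro allI impI)
    fix p :: "complex poly" assume "\<forall>i\<ge>0. coeff p i = 0"
    then have "p = 0" by (simp add: poly_eq_iff)
    then show "\<exists>c. (\<forall>k. c k \<noteq> 0 \<longrightarrow> l \<le> k \<and> k < l + 0) \<and> p = (\<Sum>k\<in>{l..<l+0}. smult (c k) (b k))"
      by (intro exI[of _ "\<lambda>k. 0"]) simp
  qed
next
  case (Suc d)
  show ?case
  proof (intro allI impI)
    fix p :: "complex poly" assume hp: "\<forall>i\<ge>Suc d. coeff p i = 0"
    define bb where "bb = b (l + d)"
    have bbd: "degree bb \<le> d" and bbc: "coeff bb d \<noteq> 0"
      using hb[of "l + d"] by (simp_all add: bb_def)
    define \<alpha> where "\<alpha> = coeff p d / coeff bb d"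
    define p' where "p' = p - smult \<alpha> bb"
    have hp': "\<forall>i\<ge>d. coeff p' i = 0"
    proof (intro allI impI)
      fix i assume "d \<le> i"
      show "coeff p' i = 0"
      proof (cases "i = d")
        case True
        then show ?thesis using bbc by (simp add: p'_def \<alpha>_def)
      next
        case False
        then have "i > d" using \<open>d \<le> i\<close> by simp
        then have "coeff bb i = 0" using bbd by (simp add: coeff_eq_0)
        then show ?thesis using hp \<open>i > d\<close> by (simp add: p'_def)
      qed
    qed
    obtain c' where c': "\<forall>k. c' k \<noteq> 0 \<longrightarrow> l \<le> k \<and> k < l + d"
       "p' = (\<Sum>k\<in>{l..<l+d}. smult (c' k) (b k))"
      using Suc.IH hp' by blast
    define c where "c = c'(l + d := \<alpha>)"
    have "(\<Sum>k\<in>{l..<l+Suc d}. smult (c k) (b k)) = (\<Sum>k\<in>{l..<l+d}. smult (c k) (b k)) + smult \<alpha> bb"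
      by (simp add: c_def bb_def)
    also have "(\<Sum>k\<in>{l..<l+d}. smult (c k) (b k)) = (\<Sum>k\<in>{l..<l+d}. smult (c' k) (b k))"
      by (rule sum.cong) (auto simp: c_def)
    finally have "(\<Sum>k\<in>{l..<l+Suc d}. smult (c k) (b k)) = p' + smult \<alpha> bb"
      using c'(2) by simp
    then have "(\<Sum>k\<in>{l..<l+Suc d}. smult (c k) (b k)) = p"
      by (simp add: p'_def)
    moreover have "\<forall>k. c k \<noteq> 0 \<longrightarrow> l \<le> k \<and> k < l + Suc d"
      using c'(1) by (auto simp: c_def)
    ultimately show "\<exists>c. (\<forall>k. c k \<noteq> 0 \<longrightarrow> l \<le> k \<and> k < l + Suc d) \<and> p = (\<Sum>k\<in>{l..<l+Suc d}. smult (c k) (b k))"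
      by (intro exI[of _ c]) simp
  qed
qed

lemma sum_supp_extend:
  fixes b :: "nat \<Rightarrow> complex poly"
  assumes "finite S" "{k. c k \<noteq> 0} \<subseteq> S"
  shows "(\<Sum>k\<in>{k. c k \<noteq> 0}. smult (c k) (b k)) = (\<Sum>k\<in>S. smult (c k) (b k))"
  by (rule sum.mono_neutral_left) (use assms in auto)

lemma lin_indep:
  fixes b :: "nat \<Rightarrow> complex poly"
  assumes hb: "\<And>k. l \<le> k \<Longrightarrow> degree (b k) \<le> k - l \<and> coeff (b k) (k - l) \<noteq> 0"
    and S: "finite S" and dl: "\<forall>k. d k \<noteq> 0 \<longrightarrow> l \<le> k"
    and z: "(\<Sum>k\<in>S. smult (d k) (b k)) = 0"
  shows "\<forall>k\<in>S. d k = 0"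
proof (rule ccontr)
  assume "\<not> (\<forall>k\<in>S. d k = 0)"
  define T where "T = {k\<in>S. d k \<noteq> 0}"
  have Tf: "finite T" "T \<noteq> {}" using S \<open>\<not> _\<close> by (auto simp: T_def)
  define K where "K = Max T"
  have KT: "K \<in> T" using Tf by (simp add: K_def)
  have Kmax: "\<And>k. k \<in> T \<Longrightarrow> k \<le> K" using Tf by (simp add: K_def)
  have lK: "l \<le> K" using KT dl by (auto simp: T_def)
  have "coeff (\<Sum>k\<in>S. smult (d k) (b k)) (K - l) = (\<Sum>k\<in>S. d k * coeff (b k) (K - l))"
    by (simp add: coeff_sum)
  also have "\<dots> = (\<Sum>k\<in>{K}. d k * coeff (b k) (K - l))"
  proof (rule sum.mono_neutral_right)
    show "finite S" by (rule S)
    show "{K} \<subseteq> S" using KT by (auto simp: T_def)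
    show "\<forall>i\<in>S - {K}. d i * coeff (b i) (K - l) = 0"
    proof
      fix i assume i: "i \<in> S - {K}"
      show "d i * coeff (b i) (K - l) = 0"
      proof (cases "d i = 0")
        case False
        then have "i \<in> T" using i by (simp add: T_def)
        then have "i < K" using Kmax i by force
        moreover have "l \<le> i" using dl False by simp
        ultimately have "degree (b i) < K - l" using hb[of i] by linarith
        then show ?thesis by (simp add: coeff_eq_0)
      qed simp
    qed
  qed
  also have "\<dots> = d K * coeff (b K) (K - l)" by simp
  finally have "d K * coeff (b K) (K - l) = 0" using z by simp
  moreover have "d K \<noteq> 0" using KT by (simp add: T_def)
  moreover have "coeff (b K) (K - l) \<noteq> 0" using hb lK by simp
  ultimately show False by simp
qed

lemma basis_unique:
  fixes b :: "nat \<Rightarrow> complex poly"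
  assumes hb: "\<And>k. l \<le> k \<Longrightarrow> degree (b k) \<le> k - l \<and> coeff (b k) (k - l) \<noteq> 0"
  shows "\<forall>p. \<exists>!c::nat \<Rightarrow> complex. finite {k. c k \<noteq> 0} \<and> (\<forall>k<l. c k = 0) \<and>
            p = (\<Sum>k\<in>{k. c k \<noteq> 0}. smult (c k) (b k))"
proof
  fix p :: "complex poly"
  have hz: "\<forall>i\<ge>Suc (degree p). coeff p i = 0" by (simp add: coeff_eq_0)
  have ex0: "\<exists>c. (\<forall>k. c k \<noteq> 0 \<longrightarrow> l \<le> k \<and> k < l + Suc (degree p)) \<and>
      p = (\<Sum>k\<in>{l..<l+Suc (degree p)}. smult (c k) (b k))"
    using basis_exists[OF hb, of "Suc (degree p)"] hz by blast
  then obtain c where c: "\<forall>k. c k \<noteq> 0 \<longrightarrow> l \<le> k \<and> k < l + Suc (degree p)"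
      "p = (\<Sum>k\<in>{l..<l+Suc (degree p)}. smult (c k) (b k))"
    by blast
  have sub: "{k. c k \<noteq> 0} \<subseteq> {l..<l+Suc (degree p)}" using c(1) by auto
  have fin: "finite {k. c k \<noteq> 0}" using sub finite_subset by blast
  have ex: "finite {k. c k \<noteq> 0} \<and> (\<forall>k<l. c k = 0) \<and> p = (\<Sum>k\<in>{k. c k \<noteq> 0}. smult (c k) (b k))"
  proof (intro conjI)
    show "finite {k. c k \<noteq> 0}" by (rule fin)
    show "\<forall>k<l. c k = 0"
    proof (intro allI impI)
      fix k assume kl: "k < l"
      show "c k = 0"
      proof (rule ccontr)
        assume "c k \<noteq> 0"
        then have "l \<le> k" using c(1) by blast
        then show False using kl by simp
      qed
    qed
    show "p = (\<Sum>k\<in>{k. c k \<noteq> 0}. smult (c k) (b k))"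
      using c(2) sum_supp_extend[OF _ sub, of b] by simp
  qed
  show "\<exists>!c::nat \<Rightarrow> complex. finite {k. c k \<noteq> 0} \<and> (\<forall>k<l. c k = 0) \<and>
            p = (\<Sum>k\<in>{k. c k \<noteq> 0}. smult (c k) (b k))"
  proof (rule ex1I[of _ c])
    show "finite {k. c k \<noteq> 0} \<and> (\<forall>k<l. c k = 0) \<and> p = (\<Sum>k\<in>{k. c k \<noteq> 0}. smult (c k) (b k))"
      by (rule ex)
    fix c2 assume h2: "finite {k. c2 k \<noteq> 0} \<and> (\<forall>k<l. c2 k = 0) \<and> p = (\<Sum>k\<in>{k. c2 k \<noteq> 0}. smult (c2 k) (b k))"
    have h2f: "finite {k. c2 k \<noteq> 0}" and h2l: "\<forall>k<l. c2 k = 0"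
      and h2e: "p = (\<Sum>k\<in>{k. c2 k \<noteq> 0}. smult (c2 k) (b k))" using h2 by blast+
    have exl: "\<forall>k<l. c k = 0" and exe: "p = (\<Sum>k\<in>{k. c k \<noteq> 0}. smult (c k) (b k))"
      using ex by blast+
    define S where "S = {k. c k \<noteq> 0} \<union> {k. c2 k \<noteq> 0}"
    have Sf: "finite S" using fin h2f by (simp add: S_def)
    have s1: "{k. c k \<noteq> 0} \<subseteq> S" "{k. c2 k \<noteq> 0} \<subseteq> S" by (auto simp: S_def)
    have e1: "p = (\<Sum>k\<in>S. smult (c k) (b k))"
      using exe sum_supp_extend[OF Sf s1(1), of b] by (rule trans)
    have e2: "p = (\<Sum>k\<in>S. smult (c2 k) (b k))"
      using h2e sum_supp_extend[OF Sf s1(2), of b] by (rule trans)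
    have "(\<Sum>k\<in>S. smult (c2 k - c k) (b k)) = (\<Sum>k\<in>S. smult (c2 k) (b k)) - (\<Sum>k\<in>S. smult (c k) (b k))"
      by (simp add: smult_diff_left sum_subtractf)
    also have "\<dots> = 0" using e1 e2 by simp
    finally have zz: "(\<Sum>k\<in>S. smult (c2 k - c k) (b k)) = 0" .
    have dd: "\<forall>k. c2 k - c k \<noteq> 0 \<longrightarrow> l \<le> k"
    proof (intro allI impI)
      fix k assume nz: "c2 k - c k \<noteq> 0"
      show "l \<le> k"
      proof (rule ccontr)
        assume "\<not> l \<le> k"
        then have "k < l" by simp
        then have "c k = 0" "c2 k = 0" using exl h2l by simp_all
        then show False using nz by simp
      qed
    qed
    have "\<forall>k\<in>S. c2 k - c k = 0"
      by (rule lin_indep[OF hb Sf dd zz])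
    then show "c2 = c"
    proof -
      assume A: "\<forall>k\<in>S. c2 k - c k = 0"
      show "c2 = c"
      proof (rule ext)
        fix k
        show "c2 k = c k"
        proof (cases "k \<in> S")
          case True
          then show ?thesis using A by simp
        next
          case False
          then show ?thesis by (simp add: S_def)
        qed
      qed
    qed
  qed
qed

definition Xp :: "complex \<Rightarrow> complex poly" where
  "Xp lam = [:(1 - lam) / 2, - 1/2:]"

abbreviation PP :: "complex \<Rightarrow> nat \<Rightarrow> complex poly" where
  "PP lam i \<equiv> pochhammer (Xp lam) i"

lemma shiftp_of_nat[simp]: "shiftp c (of_nat n) = of_nat n"
  by (simp add: of_nat_poly)

lemma shiftp_poch: "shiftp c (pochhammer q i) = pochhammer (shiftp c q) i"
  by (induction i) (simp_all add: pochhammer_Suc)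

lemma shiftp_Xp_m2: "shiftp (-2) (Xp lam) = Xp lam + 1"
  by (simp add: Xp_def one_pCons)

lemma shiftp_Xp_2: "shiftp 2 (Xp lam) = Xp lam - 1"
  by (simp add: Xp_def one_pCons)

lemma Tp_Xp: "Tp lam j = - ((Xp lam - [:of_int j:]) * (Xp lam + [:lam - of_int j:]))"
  by (simp add: Tp_explicit Xp_def field_simps power2_eq_square)

lemma Lop_PP: "Lop lam (int l) (PP lam i) =
   smult (2 * of_nat l + of_nat i) (PP lam (Suc i)) +
   smult ((of_nat i + of_nat l) * (lam - of_nat l - of_nat i)) (PP lam i)"
proof -
  have s: "shiftp (-2) (PP lam i) = pochhammer (Xp lam + 1) i"
    by (simp add: shiftp_poch shiftp_Xp_m2)
  have r: "Xp lam * pochhammer (Xp lam + 1) i = PP lam i * (Xp lam + of_nat i)"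
    by (simp add: pochhammer_rec[symmetric] pochhammer_Suc)
  have "Lop lam (int l) (PP lam i) = PP lam i * (- ((Xp lam - [:of_nat l:]) * (Xp lam + [:lam - of_nat l:])))
        + (Xp lam * pochhammer (Xp lam + 1) i) * (Xp lam + [:lam:])"
    by (simp add: Lop_def s Tp_Xp algebra_simps)
  also have "\<dots> = PP lam i * (- ((Xp lam - [:of_nat l:]) * (Xp lam + [:lam - of_nat l:])))
        + (PP lam i * (Xp lam + of_nat i)) * (Xp lam + [:lam:])"
    by (simp only: r)
  also have "\<dots> = PP lam i * (- ((Xp lam - [:of_nat l:]) * (Xp lam + [:lam - of_nat l:])) + (Xp lam + of_nat i) * (Xp lam + [:lam:]))"
    by (simp add: algebra_simps)
  also have "- ((Xp lam - [:of_nat l:]) * (Xp lam + [:lam - of_nat l:])) + (Xp lam + of_nat i) * (Xp lam + [:lam:]) =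
     [:2 * of_nat l + of_nat i:] * (Xp lam + of_nat i) + [:(of_nat i + of_nat l) * (lam - of_nat l - of_nat i):]"
    by (simp add: Xp_def of_nat_poly field_simps)
  also have "PP lam i * ([:2 * of_nat l + of_nat i:] * (Xp lam + of_nat i) + [:(of_nat i + of_nat l) * (lam - of_nat l - of_nat i):]) =
     smult (2 * of_nat l + of_nat i) (PP lam (Suc i)) +
     smult ((of_nat i + of_nat l) * (lam - of_nat l - of_nat i)) (PP lam i)"
    by (simp add: pochhammer_Suc algebra_simps)
  finally show ?thesis .
qed

lemma Rop_PP_Suc: "Rop (PP lam (Suc j)) = smult (of_nat (Suc j)) (PP lam j)"
proof -
  have h: "shiftp 2 (PP lam (Suc j)) = (Xp lam - 1) * PP lam j"
  proof -
    have "shiftp 2 (PP lam (Suc j)) = pochhammer (Xp lam - 1) (Suc j)"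
      by (simp only: shiftp_poch shiftp_Xp_2)
    also have "\<dots> = (Xp lam - 1) * PP lam j"
      by (simp only: pochhammer_rec diff_add_cancel)
    finally show ?thesis .
  qed
  have "Rop (PP lam (Suc j)) = PP lam (Suc j) - (Xp lam - 1) * PP lam j"
    by (simp only: Rop_def h)
  also have "\<dots> = PP lam j * (Xp lam + of_nat j) - (Xp lam - 1) * PP lam j"
    by (simp only: pochhammer_Suc)
  also have "\<dots> = smult (of_nat (Suc j)) (PP lam j)"
    by (simp add: algebra_simps of_nat_poly smult_add_left)
  finally show ?thesis .
qed

lemma Rop_PP_0: "Rop (PP lam 0) = 0"
  by (simp add: Rop_def)

definition ee :: "complex \<Rightarrow> nat \<Rightarrow> nat \<Rightarrow> complex" where
  "ee lam l i = (of_nat i + of_nat l) * (lam - of_nat l - of_nat i)"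

lemma RL_PP: "Rop (Lop lam (int l) (PP lam i)) =
   smult ((2 * of_nat l + of_nat i) * of_nat (Suc i)) (PP lam i) +
   smult (ee lam l i * of_nat i) (PP lam (i - 1))"
proof (cases i)
  case 0
  show ?thesis unfolding 0
    by (simp only: Lop_PP Rop_add Rop_smult Rop_PP_Suc Rop_PP_0) (simp add: ee_def)
next
  case (Suc j)
  then show ?thesis
    by (simp add: Lop_PP Rop_add Rop_smult Rop_PP_Suc ee_def del: pochhammer_Suc)
qed

definition aa :: "complex \<Rightarrow> nat \<Rightarrow> nat \<Rightarrow> nat \<Rightarrow> complex" where
  "aa lam k l i = pochhammer (of_int (int l - int k)) i * pochhammer (of_nat (l + k + 1)) i
             / (pochhammer (of_nat (l + 1)) i * pochhammer (of_nat (l + 1) - lam) i * fact i)"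

lemma F32_PP: "F32 lam k l = (\<Sum>i\<le>k - l. smult (aa lam k l i) (PP lam i))"
  by (simp add: F32_def aa_def Xp_def)

lemma aa_ratio:
  assumes lam: "\<forall>n::int. n \<noteq> 0 \<longrightarrow> lam \<noteq> of_int n" and lk: "l \<le> k"
  shows "aa lam k l (Suc i) * ee lam l (Suc i) * of_nat (Suc i) =
         aa lam k l i * ((of_nat k + of_nat l) * (of_nat k - of_nat l + 1) - (2 * of_nat l + of_nat i) * of_nat (Suc i))"
proof -
  define A where "A = (pochhammer (of_int (int l - int k)) i * pochhammer (of_nat (l + k + 1)) i :: complex)"
  define D where "D = pochhammer (of_nat (l + 1)) i * pochhammer (of_nat (l + 1) - lam) i * (fact i :: complex)"
  have n1: "pochhammer (of_nat (l + 1)) i \<noteq> (0::complex)"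
  proof
    assume "pochhammer (of_nat (l + 1)) i = (0::complex)"
    then obtain j where "(of_nat (l + 1) :: complex) = - of_nat j" by (auto simp: pochhammer_eq_0_iff)
    then have "(of_nat (l + 1 + j) :: complex) = of_nat 0" by (simp add: algebra_simps eq_neg_iff_add_eq_0)
    then have "l + 1 + j = 0" by (simp only: of_nat_eq_iff)
    then show False by simp
  qed
  have n2: "pochhammer (of_nat (l + 1) - lam) i \<noteq> 0"
  proof
    assume "pochhammer (of_nat (l + 1) - lam) i = 0"
    then obtain j where eq: "of_nat (l + 1) - lam = - of_nat j" by (auto simp: pochhammer_eq_0_iff)
    have "lam = of_nat (l + 1) - (of_nat (l + 1) - lam)" by simp
    also have "\<dots> = of_int (int (l + 1 + j))" unfolding eq by simp
    finally have "lam = of_int (int (l + 1 + j))" .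
    moreover have "int (l + 1 + j) \<noteq> 0" by simp
    ultimately show False using lam by blast
  qed
  have n3: "(of_nat (l + 1) - lam + of_nat i) \<noteq> 0"
  proof
    assume eq0: "of_nat (l + 1) - lam + of_nat i = 0"
    have eq: "of_nat (l + 1) - lam = - of_nat i" using eq0 by (simp add: eq_neg_iff_add_eq_0)
    have "lam = of_nat (l + 1) - (of_nat (l + 1) - lam)" by simp
    also have "\<dots> = of_int (int (l + 1 + i))" unfolding eq by simp
    finally have "lam = of_int (int (l + 1 + i))" .
    moreover have "int (l + 1 + i) \<noteq> 0" by simp
    ultimately show False using lam by blast
  qed
  have D0: "D \<noteq> 0" using n1 n2 by (simp add: D_def)
  have aai: "aa lam k l i = A / D" by (simp add: aa_def A_def D_def)
  have aaS: "aa lam k l (Suc i) = A * ((of_nat l - of_nat k + of_nat i) * (of_nat (l + k + 1) + of_nat i))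
      / (D * ((of_nat (l + 1) + of_nat i) * (of_nat (l + 1) - lam + of_nat i) * of_nat (Suc i)))"
    by (simp add: aa_def A_def D_def pochhammer_Suc fact_Suc algebra_simps)
  have n4: "(of_nat (l + 1) + of_nat i :: complex) \<noteq> 0" by (metis add_is_0 of_nat_add of_nat_eq_0_iff one_neq_zero)
  define M where "M = (of_nat (l + 1) + of_nat i) * (of_nat (l + 1) - lam + of_nat i) * (of_nat (Suc i) :: complex)"
  define N1 where "N1 = (of_nat l - of_nat k + of_nat i) * (of_nat (l + k + 1) + of_nat i :: complex)"
  have n5: "(of_nat (Suc i) :: complex) \<noteq> 0" by (rule of_nat_neq_0)
  have M0: "M \<noteq> 0" unfolding M_def using n3 n4 n5 by (simp only: mult_eq_0_iff de_Morgan_disj) simp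
  have x1: "ee lam l (Suc i) * of_nat (Suc i) = - M"
    by (simp add: ee_def M_def algebra_simps)
  have "aa lam k l (Suc i) * ee lam l (Suc i) * of_nat (Suc i) = aa lam k l (Suc i) * (- M)"
    by (simp only: mult.assoc x1)
  also have "\<dots> = - (A * N1 / D)"
  proof -
    have aaS': "aa lam k l (Suc i) = A * N1 / (D * M)" by (simp add: aaS M_def N1_def)
    show ?thesis using M0 D0 by (simp add: aaS' field_simps)
  qed
  also have "N1 = - ((of_nat k + of_nat l) * (of_nat k - of_nat l + 1) - (2 * of_nat l + of_nat i) * of_nat (Suc i))"
    by (simp add: N1_def algebra_simps)
  finally have F: "aa lam k l (Suc i) * ee lam l (Suc i) * of_nat (Suc i) =
      - (A * ((2 * of_nat l + of_nat i) * of_nat (Suc i) - (of_nat k + of_nat l) * (of_nat k - of_nat l + 1)) / D)"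
    by (simp add: algebra_simps)
  show ?thesis unfolding F aai using D0 by (simp add: field_simps)
qed

lemma Lop_0[simp]: "Lop lam m 0 = 0" by (simp add: Lop_def)

lemma RL_sum: "Rop (Lop lam m (\<Sum>i\<in>A. smult (a i) (p i))) = (\<Sum>i\<in>A. smult (a i) (Rop (Lop lam m (p i))))"
  by (induction A rule: infinite_finite_induct) (simp_all add: Lop_add Rop_add Lop_smult Rop_smult)

lemma smult_sum_right: "smult c (sum f A) = (\<Sum>i\<in>A. smult c (f i))"
  by (induction A rule: infinite_finite_induct) (simp_all add: smult_add_right)

lemma sum_shift0: "G 0 = (0::'a::comm_monoid_add) \<Longrightarrow> (\<Sum>i\<le>n. G i) = (\<Sum>i<n. G (Suc i))"
proof (cases n)
  case 0
  assume "G 0 = 0"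
  then show ?thesis using 0 by simp
next
  case (Suc m)
  assume "G 0 = 0"
  then show ?thesis unfolding Suc sum.atMost_Suc_shift lessThan_Suc_atMost by simp
qed

lemma aa_top: "l \<le> k \<Longrightarrow> aa lam k l (Suc (k - l)) = 0"
proof -
  assume lk: "l \<le> k"
  have "of_int (int l - int k) = - (of_nat (k - l) :: complex)" using lk by (simp add: of_nat_diff)
  then have "pochhammer (of_int (int l - int k)) (Suc (k - l)) = (0::complex)"
    by (auto simp: pochhammer_eq_0_iff)
  then show ?thesis by (simp add: aa_def)
qed

lemma F32_eigen:
  assumes lam: "\<forall>n::int. n \<noteq> 0 \<longrightarrow> lam \<noteq> of_int n" and lk: "l \<le> k"
  shows "Rop (Lop lam (int l) (F32 lam k l)) =
     smult ((of_nat k + of_nat l) * (of_nat k - of_nat l + 1)) (F32 lam k l)"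
proof -
  define n where "n = k - l"
  define c :: complex where "c = (of_nat k + of_nat l) * (of_nat k - of_nat l + 1)"
  define G where "G = (\<lambda>i. smult (aa lam k l i * (ee lam l i * of_nat i)) (PP lam (i - 1)))"
  have "Rop (Lop lam (int l) (F32 lam k l)) =
     (\<Sum>i\<le>n. smult (aa lam k l i) (Rop (Lop lam (int l) (PP lam i))))"
    by (simp add: F32_PP RL_sum n_def)
  also have "\<dots> = (\<Sum>i\<le>n. smult (aa lam k l i * ((2 * of_nat l + of_nat i) * of_nat (Suc i))) (PP lam i)) +
                 (\<Sum>i\<le>n. G i)"
    by (simp add: RL_PP sum.distrib smult_add_right G_def del: of_nat_Suc)
  also have "(\<Sum>i\<le>n. G i) = (\<Sum>i<n. G (Suc i))"
    by (rule sum_shift0) (simp add: G_def)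
  also have "\<dots> = (\<Sum>i\<le>n. G (Suc i))"
    using aa_top[OF lk] by (simp add: lessThan_Suc_atMost[symmetric] G_def n_def)
  also have "\<dots> = (\<Sum>i\<le>n. smult (aa lam k l i * (c - (2 * of_nat l + of_nat i) * of_nat (Suc i))) (PP lam i))"
  proof (rule sum.cong)
    fix i assume "i \<in> {..n}"
    have "aa lam k l (Suc i) * (ee lam l (Suc i) * of_nat (Suc i)) = aa lam k l i * (c - (2 * of_nat l + of_nat i) * of_nat (Suc i))"
      using aa_ratio[OF lam lk, of i] by (simp add: c_def mult.assoc del: of_nat_Suc)
    then show "G (Suc i) = smult (aa lam k l i * (c - (2 * of_nat l + of_nat i) * of_nat (Suc i))) (PP lam i)"
      by (simp add: G_def del: of_nat_Suc)
  qed simp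
  also have "(\<Sum>i\<le>n. smult (aa lam k l i * ((2 * of_nat l + of_nat i) * of_nat (Suc i))) (PP lam i)) + \<dots> =
       (\<Sum>i\<le>n. smult (c * aa lam k l i) (PP lam i))"
    by (simp add: sum.distrib[symmetric] smult_add_left[symmetric] algebra_simps del: of_nat_Suc)
  also have "\<dots> = smult c (F32 lam k l)"
    by (simp add: F32_PP n_def smult_sum_right smult_smult[symmetric] del: smult_smult)
  finally show ?thesis by (simp add: c_def)
qed

lemma Rop_1[simp]: "Rop 1 = 0" by (simp add: Rop_const)

lemma Qs_eigen: "d \<le> k \<Longrightarrow> Rop (Lop lam (int k - int d) (Qs lam k d)) =
    smult ((2 * of_nat k - of_nat d) * (of_nat d + 1)) (Qs lam k d)"
proof (induction d)
  case 0
  have "Rop (Lop lam (int k) 1) = Lop lam (int k + 1) (Rop 1) + smult (2 * of_int (int k)) 1"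
    by (rule Rop_Lop)
  then show ?case by simp
next
  case (Suc d)
  have dk: "d < k" using Suc.prems by simp
  define m where "m = int k - int (Suc d)"
  have m1: "m + 1 = int k - int d" by (simp add: m_def)
  define cd :: complex where "cd = (2 * of_nat k - of_nat d) * (of_nat d + 1)"
  have q: "Qs lam k (Suc d) = Lop lam (int k - int d) (Qs lam k d)" by (rule Qs_Suc_lt[OF dk])
  have IH: "Rop (Qs lam k (Suc d)) = smult cd (Qs lam k d)"
    using Suc.IH dk by (simp add: q cd_def)
  have "Rop (Lop lam m (Qs lam k (Suc d))) = Lop lam (m + 1) (Rop (Qs lam k (Suc d))) + smult (2 * of_int m) (Qs lam k (Suc d))"
    by (rule Rop_Lop)
  also have "\<dots> = smult cd (Qs lam k (Suc d)) + smult (2 * of_int m) (Qs lam k (Suc d))"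
  proof -
    have "Lop lam (m + 1) (Rop (Qs lam k (Suc d))) = Lop lam (int k - int d) (smult cd (Qs lam k d))"
      by (simp only: IH m1)
    also have "\<dots> = smult cd (Qs lam k (Suc d))"
      by (simp only: Lop_smult q)
    finally show ?thesis by (simp only:)
  qed
  also have "\<dots> = smult ((2 * of_nat k - of_nat (Suc d)) * (of_nat (Suc d) + 1)) (Qs lam k (Suc d))"
  proof -
    have om: "of_int m = (of_nat k - of_nat d - 1 :: complex)" by (simp add: m_def)
    have "cd + 2 * of_int m = (2 * of_nat k - of_nat (Suc d)) * (of_nat (Suc d) + (1::complex))"
      unfolding om cd_def by (simp add: algebra_simps)
    then show ?thesis by (simp add: smult_add_left[symmetric])
  qed
  finally show ?case by (simp only: m_def)
qed

lemma RL_coeff: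
  assumes "degree y \<le> d"
  shows "degree (Rop (Lop lam (int l) y)) \<le> d"
    "coeff (Rop (Lop lam (int l) y)) d = of_nat (Suc d) * (of_nat d + 2 * of_nat l) * coeff y d"
proof -
  note L = Lop_deg[OF assms, of lam "int l"]
  note R = Rop_deg[OF L(1)]
  show "degree (Rop (Lop lam (int l) y)) \<le> d" by (rule R(1))
  show "coeff (Rop (Lop lam (int l) y)) d = of_nat (Suc d) * (of_nat d + 2 * of_nat l) * coeff y d"
    unfolding R(2) L(2) by (simp add: field_simps)
qed

lemma eigen_unique:
  assumes ev1: "Rop (Lop lam (int l) y1) = smult c y1"
    and ev2: "Rop (Lop lam (int l) y2) = smult c y2"
    and d1: "degree y1 \<le> n" and d2: "degree y2 \<le> n"
    and c: "c = of_nat (Suc n) * (of_nat n + 2 * of_nat l)"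
    and c1: "coeff y1 n \<noteq> 0" and y2: "y2 \<noteq> 0"
  shows "\<exists>a. a \<noteq> 0 \<and> y1 = smult a y2"
proof -
  define z where "z = smult (coeff y2 n) y1 - smult (coeff y1 n) y2"
  have evz: "Rop (Lop lam (int l) z) = smult c z"
    by (simp add: z_def Lop_diff Rop_diff Lop_smult Rop_smult ev1 ev2 smult_diff_right algebra_simps)
  have dz: "degree z \<le> n" unfolding z_def
    by (intro degree_diff_le order_trans[OF degree_smult_le] d1 d2)
  have cz: "coeff z n = 0" by (simp add: z_def)
  have z0: "z = 0"
  proof (rule ccontr)
    assume nz: "z \<noteq> 0"
    define d where "d = degree z"
    have lc: "coeff z d \<noteq> 0" using nz by (simp add: d_def)
    have "d \<le> n" using dz by (simp add: d_def)
    moreover have "d \<noteq> n" using cz lc by auto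
    ultimately have dn: "d < n" by simp
    have "coeff (Rop (Lop lam (int l) z)) d = of_nat (Suc d) * (of_nat d + 2 * of_nat l) * coeff z d"
      by (rule RL_coeff(2)) (simp add: d_def)
    also have "coeff (Rop (Lop lam (int l) z)) d = c * coeff z d" by (simp add: evz)
    finally have cd_eq: "c = of_nat (Suc d) * (of_nat d + 2 * of_nat l)" using lc by simp
    have e1: "c = of_nat (Suc n * (n + 2 * l))" by (simp add: c algebra_simps)
    have e2: "of_nat (Suc d) * (of_nat d + 2 * of_nat l) = (of_nat (Suc d * (d + 2 * l)) :: complex)" by (simp add: algebra_simps)
    have "(of_nat (Suc n * (n + 2 * l)) :: complex) = of_nat (Suc d * (d + 2 * l))"
      by (simp only: e1[symmetric] e2[symmetric] cd_eq)
    then have eqn: "Suc n * (n + 2 * l) = Suc d * (d + 2 * l)" by (simp only: of_nat_eq_iff)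
    have "Suc d * (d + 2 * l) < Suc n * (n + 2 * l)"
    proof -
      have "Suc d * (d + 2 * l) \<le> Suc d * (n + 2 * l)" by (rule mult_le_mono2) (use dn in simp)
      also have "\<dots> < Suc n * (n + 2 * l)" by (rule mult_less_mono1) (use dn in simp_all)
      finally show ?thesis .
    qed
    then show False using eqn by simp
  qed
  have c2: "coeff y2 n \<noteq> 0"
  proof
    assume "coeff y2 n = 0"
    then have "smult (coeff y1 n) y2 = 0" using z0 by (simp add: z_def)
    then show False using c1 y2 by simp
  qed
  have "smult (coeff y2 n) y1 = smult (coeff y1 n) y2" using z0 by (simp add: z_def)
  then have eq: "smult (coeff y2 n) y1 = smult (coeff y1 n) y2" .
  have "y1 = smult (inverse (coeff y2 n)) (smult (coeff y2 n) y1)" using c2 by simp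
  also have "\<dots> = smult (coeff y1 n / coeff y2 n) y2"
    by (simp only: eq smult_smult) (simp add: divide_inverse mult.commute)
  finally show ?thesis using c1 c2 by (intro exI[of _ "coeff y1 n / coeff y2 n"]) simp
qed

lemma degree_PP: "degree (PP lam i) \<le> i"
proof (induction i)
  case 0
  then show ?case by simp
next
  case (Suc i)
  have d1: "degree (Xp lam + of_nat i) \<le> 1" by (simp add: Xp_def of_nat_poly)
  have "degree (PP lam (Suc i)) \<le> degree (PP lam i) + degree (Xp lam + of_nat i)"
    by (simp only: pochhammer_Suc degree_mult_le)
  then show ?case using Suc d1 by simp
qed

lemma poly_PP: "poly (PP lam i) x = pochhammer (poly (Xp lam) x) i"
  by (induction i) (simp_all add: pochhammer_Suc)

lemma F32_deg: "degree (F32 lam k l) \<le> k - l"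
  unfolding F32_PP
proof (rule degree_sum_le)
  fix i assume "i \<in> {..k - l}"
  then show "degree (smult (aa lam k l i) (PP lam i)) \<le> k - l"
    using degree_PP[of lam i] degree_smult_le[of "aa lam k l i" "PP lam i"] by simp
qed simp

lemma F32_nz: "F32 lam k l \<noteq> 0"
proof -
  have px: "poly (Xp lam) (1 - lam) = 0" by (simp add: Xp_def field_simps)
  have "poly (F32 lam k l) (1 - lam) = (\<Sum>i\<le>k - l. aa lam k l i * pochhammer 0 i)"
    by (simp add: F32_PP poly_sum poly_PP px)
  also have "\<dots> = (\<Sum>i\<in>{0}. aa lam k l i * pochhammer 0 i)"
    by (rule sum.mono_neutral_right) (auto simp: pochhammer_0_left)
  also have "\<dots> = 1" by (simp add: aa_def)
  finally show ?thesis by auto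
qed

lemma part3:
  assumes lam: "\<forall>n::int. n \<noteq> 0 \<longrightarrow> lam \<noteq> of_int n" and lk: "l \<le> k"
  shows "\<exists>c::complex. c \<noteq> 0 \<and> fkl lam k (int l) = smult c (F32 lam k l)"
proof -
  define n where "n = k - l"
  define c :: complex where "c = (of_nat k + of_nat l) * (of_nat k - of_nat l + 1)"
  have f: "fkl lam k (int l) = Qs lam k n"
    using lk by (simp add: fkl_Qs n_def nat_diff_distrib)
  have kn: "int k - int n = int l" using lk by (simp add: n_def)
  have ev1: "Rop (Lop lam (int l) (Qs lam k n)) = smult c (Qs lam k n)"
  proof -
    have "Rop (Lop lam (int k - int n) (Qs lam k n)) = smult ((2 * of_nat k - of_nat n) * (of_nat n + 1)) (Qs lam k n)"
      by (rule Qs_eigen) (simp add: n_def)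
    moreover have "(2 * of_nat k - of_nat n) * (of_nat n + 1) = c"
      using lk by (simp add: c_def n_def of_nat_diff algebra_simps)
    ultimately show ?thesis by (simp only: kn)
  qed
  have ev2: "Rop (Lop lam (int l) (F32 lam k l)) = smult c (F32 lam k l)"
    unfolding c_def by (rule F32_eigen[OF lam lk])
  have cc: "c = of_nat (Suc n) * (of_nat n + 2 * of_nat l)"
    using lk by (simp add: c_def n_def of_nat_diff algebra_simps)
  have QD: "degree (Qs lam k n) \<le> n \<and> coeff (Qs lam k n) n \<noteq> 0"
    by (rule Qs_deg) (simp add: n_def)
  have "\<exists>a. a \<noteq> 0 \<and> Qs lam k n = smult a (F32 lam k l)"
    by (rule eigen_unique[OF ev1 ev2 _ _ cc]) (use QD F32_deg[of lam k l] F32_nz[of lam k l] in \<open>simp_all add: n_def\<close>)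
  then show ?thesis by (simp add: f)
qed

theorem theorem9p1:
  fixes lam :: complex
  assumes lam: "\<forall>n::int. n \<noteq> 0 \<longrightarrow> lam \<noteq> of_int n"
  shows
    "(\<forall>(k::nat) (k'::nat) (l::int) (l'::int).
        \<bar>l\<bar> \<le> int k \<longrightarrow> \<bar>l'\<bar> \<le> int k' \<longrightarrow> \<not> (k = k' \<and> l + l' = 0) \<longrightarrow>
        pairing lam (ekl lam k l) (ekl lam k' l') = 0)
   \<and> (\<forall>l::nat.
        (\<forall>k k'. l \<le> k \<longrightarrow> l \<le> k' \<longrightarrow> k \<noteq> k' \<longrightarrow>
            form_l lam l (fkl lam k (int l)) (fkl lam k' (int l)) = 0)
      \<and> (\<forall>p::complex poly. \<exists>!c::nat \<Rightarrow> complex.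
            finite {k. c k \<noteq> 0} \<and> (\<forall>k<l. c k = 0) \<and>
            p = (\<Sum>k\<in>{k. c k \<noteq> 0}. smult (c k) (fkl lam k (int l)))))
   \<and> (\<forall>(k::nat) (l::nat). l \<le> k \<longrightarrow>
        (\<exists>c::complex. c \<noteq> 0 \<and> fkl lam k (int l) = smult c (F32 lam k l)))"
proof (intro conjI allI impI)
  fix k k' :: nat and l l' :: int
  assume "\<bar>l\<bar> \<le> int k" "\<bar>l'\<bar> \<le> int k'" "\<not> (k = k' \<and> l + l' = 0)"
  then show "pairing lam (ekl lam k l) (ekl lam k' l') = 0" by (rule part1)
next
  fix l k k' :: nat
  assume a: "l \<le> k" "l \<le> k'" "k \<noteq> k'"
  have f1: "fkl lam k (int l) = Qs lam k (k - l)" using a by (simp add: fkl_Qs nat_diff_distrib)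
  have f2: "fkl lam k' (int l) = Qs lam k' (k' - l)" using a by (simp add: fkl_Qs nat_diff_distrib)
  have "form_l lam l (fkl lam k (int l)) (fkl lam k' (int l)) = B lam l (Qs lam k (k - l)) (Qs lam k' (k' - l))"
    by (simp add: form_l_def B_def W_def f1 f2)
  then show "form_l lam l (fkl lam k (int l)) (fkl lam k' (int l)) = 0"
    using orth_l[OF a] by simp
next
  fix l :: nat and p :: "complex poly"
  have hb: "degree (fkl lam k (int l)) \<le> k - l \<and> coeff (fkl lam k (int l)) (k - l) \<noteq> 0" if "l \<le> k" for k
    using Qs_deg[of "k - l" k lam] that by (simp add: fkl_Qs nat_diff_distrib)
  have "\<forall>p::complex poly. \<exists>!c::nat \<Rightarrow> complex.
            finite {k. c k \<noteq> 0} \<and> (\<forall>k<l. c k = 0) \<and>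
            p = (\<Sum>k\<in>{k. c k \<noteq> 0}. smult (c k) (fkl lam k (int l)))"
    by (rule basis_unique) (rule hb)
  then show "\<exists>!c::nat \<Rightarrow> complex.
            finite {k. c k \<noteq> 0} \<and> (\<forall>k<l. c k = 0) \<and>
            p = (\<Sum>k\<in>{k. c k \<noteq> 0}. smult (c k) (fkl lam k (int l)))"
    by (rule spec)
next
  fix k l :: nat
  assume "l \<le> k"
  then show "\<exists>c::complex. c \<noteq> 0 \<and> fkl lam k (int l) = smult c (F32 lam k l)"
    by (rule part3[OF lam])
qed


end
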